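(* Let $d\ge 2$, $0<r<1$, $\rho>0$, and let $\mu$ be the uniform probability measure on the unit sphere $S^{d-1}\subset\mathbb{R}^d$. Let $k(x,y)=\mathbf 1(\|x-y\|\le r)$ (Euclidean distance). Fix $x_0\in S^{d-1}$, let $M^s=\{y\in S^{d-1}:\|y-x_0\|\le r\}$, and let $v_0:S^{d-1}\to[0,1]$ be the unique measurable map with $v_0=1$ on $M^s$ and, for $x\in S^{d-1}\setminus M^s$, $$v_0(x)=\frac{\int_{M^s}k(x,y)d\mu(y)+\int_{S^{d-1}\setminus M^s}v_0(y)k(x,y)d\mu(y)}{\rho+\int_{S^{d-1}}k(x,y)d\mu(y)}.$$ Let $\angle(x,x')=\arccos\langle x,x'\rangle$ and let $r'\in[0,\pi]$ be the angle $\angle(x,x')$ for points with $\|x-x'\|=r$. Then there exists a function $f:[0,\pi]\to[0,1]$ such that (1) $v_0(x)=f(\angle(x_0,x))$ for all $x\in S^{d-1}$, and (2) $f(\theta)>f(\theta')$ for all $\theta,\theta'\in[0,\pi]$ with $\theta'>\theta+r'$.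
   Context: $v_0$ is called the grounded voltage function centered at $x_0$ with ground weight $\rho$, source radius $r$ and disk kernel of bandwidth $r$. *)

theory Defs
  imports "HOL-Analysis.Analysis"
begin

text \<open>Uniform probability measure on the unit sphere of a Euclidean space:
  the push-forward of the normalised Lebesgue measure on the unit ball under the
  radial projection x \<mapsto> x / norm x (the point 0 has measure zero).
  This is the rotation-invariant probability measure on the sphere, i.e. the
  normalised surface measure.  It lives on the Borel sets of the ambient space
  and is concentrated on sphere 0 1.\<close>
definition sphere_unif :: "'a::euclidean_space measure" where
  "sphere_unif = distr (uniform_measure lborel (ball 0 1)) borel (\<lambda>x. x /\<^sub>R norm x)"

definition disk_kernel :: "real \<Rightarrow> 'a::euclidean_space \<Rightarrow> 'a \<Rightarrow> real" where
  "disk_kernel r x y = (if dist x y \<le> r then 1 else 0)"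

definition sph_angle :: "'a::euclidean_space \<Rightarrow> 'a \<Rightarrow> real" where
  "sph_angle x x' = arccos (x \<bullet> x')"

end

theory Submission
  imports Defs "HOL-Probability.Probability"
begin

definition hrefl :: "'a::euclidean_space \<Rightarrow> 'a \<Rightarrow> 'a" where
  "hrefl u y = y - (2 * (y \<bullet> u)) *\<^sub>R u"

context fixes u :: "'a::euclidean_space" assumes u: "norm u = 1"
begin
lemma uu: "u \<bullet> u = 1" using u by (simp add: norm_eq_1)
lemma hrefl_inner: "hrefl u x \<bullet> hrefl u y = x \<bullet> y"
  using uu by (simp add: hrefl_def inner_diff_left inner_diff_right algebra_simps inner_commute)
lemma hrefl_invol[simp]: "hrefl u (hrefl u y) = y"
  using uu by (simp add: hrefl_def inner_diff_left algebra_simps)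
lemma hrefl_u: "hrefl u y \<bullet> u = - (y \<bullet> u)"
  using uu by (simp add: hrefl_def inner_diff_left algebra_simps)
lemma hrefl_linear: "linear (hrefl u)"
  unfolding hrefl_def by (rule linearI) (auto simp: algebra_simps inner_add_left scaleR_add_left)
lemma hrefl_orth: "orthogonal_transformation (hrefl u)"
  using hrefl_linear hrefl_inner by (simp add: orthogonal_transformation_def)
lemma hrefl_norm[simp]: "norm (hrefl u x) = norm x"
  using hrefl_inner[of x x] by (simp add: norm_eq_sqrt_inner)
lemma hrefl_dist: "dist (hrefl u x) (hrefl u y) = dist x y"
proof -
  have "hrefl u x - hrefl u y = hrefl u (x - y)"
    by (simp add: hrefl_def inner_diff_left algebra_simps)
  then show ?thesis by (simp add: dist_norm)
qed
lemma hrefl_dist2: "dist x (hrefl u y) = dist (hrefl u x) y"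
  using hrefl_dist[of "hrefl u x" y] by simp
lemma hrefl_side: assumes "z \<bullet> u \<ge> 0" "y \<bullet> u \<ge> 0" shows "dist z y \<le> dist (hrefl u z) y"
proof -
  have "(dist (hrefl u z) y)^2 = (dist z y)^2 + 4 * (z \<bullet> u) * (y \<bullet> u)"
    using uu by (simp add: dist_norm power2_norm_eq_inner hrefl_def inner_diff_left inner_diff_right algebra_simps inner_commute)
  moreover have "4 * (z \<bullet> u) * (y \<bullet> u) \<ge> 0" using assms by simp
  ultimately have "(dist z y)^2 \<le> (dist (hrefl u z) y)^2" by linarith
  then show ?thesis by (simp add: power2_le_iff_abs_le)
qed
lemma hrefl_sphere: "hrefl u y \<in> sphere 0 1 \<longleftrightarrow> y \<in> sphere 0 1" by simp
end

lemma hrefl_meas[measurable]: "hrefl u \<in> borel_measurable borel"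
  unfolding hrefl_def by measurable

lemma space_su[simp]: "space sphere_unif = UNIV" by (simp add: sphere_unif_def)
lemma sets_su[simp, measurable_cong]: "sets sphere_unif = sets borel" by (simp add: sphere_unif_def)

lemma nrm_meas[measurable]: "(\<lambda>x::'a::euclidean_space. x /\<^sub>R norm x) \<in> borel_measurable borel"
  by measurable

lemma ball_pos: "emeasure lborel (ball (0::'a::euclidean_space) 1) \<noteq> 0"
proof -
  have "0 < measure lborel (ball (0::'a) 1)" using content_ball_pos[of 1 "0::'a"] by simp
  then show ?thesis using emeasure_lborel_ball_finite[of "0::'a" 1]
    by (simp add: emeasure_eq_ennreal_measure)
qed

lemma su_prob: "prob_space (sphere_unif :: 'a::euclidean_space measure)"
proof -
  have "prob_space (uniform_measure lborel (ball (0::'a) 1))"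
    by (rule prob_space_uniform_measure) (use ball_pos emeasure_lborel_ball_finite[of "0::'a" 1] in auto)
  then show ?thesis unfolding sphere_unif_def
    by (rule prob_space.prob_space_distr) measurable
qed

lemma su_emeasure: "A \<in> sets borel \<Longrightarrow> emeasure (sphere_unif::'a::euclidean_space measure) A =
   emeasure lborel (ball 0 1 \<inter> ((\<lambda>x. x /\<^sub>R norm x) -` A)) / emeasure lborel (ball (0::'a) 1)"
  unfolding sphere_unif_def
  by (subst emeasure_distr) (auto intro!: emeasure_uniform_measure measurable_sets_borel[OF nrm_meas])

lemma hrefl_vimage: "norm u = 1 \<Longrightarrow> hrefl u -` E = hrefl u ` E"
  by (auto simp: image_iff) (metis hrefl_invol)

lemma null_borel: "N \<in> sets borel \<Longrightarrow> negligible N \<Longrightarrow> N \<in> null_sets lborel"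
  by (auto simp: negligible_iff_null_sets null_sets_def)

lemma lborel_open_inv:
  fixes S :: "'a::euclidean_space set"
  assumes u: "norm u = 1" and S: "open S"
  shows "emeasure lborel (hrefl u -` S) = emeasure lborel S"
proof -
  define f where "f = hrefl u"
  have orth: "orthogonal_transformation f" unfolding f_def by (rule hrefl_orth[OF u])
  have lin: "linear f" using orth by (simp add: orthogonal_transformation_linear)
  have inj: "inj f" unfolding f_def by (metis u hrefl_invol injI)
  let ?K = "{p :: 'a \<times> real. snd p > 0 \<and> ball (fst p) (snd p) \<subseteq> S}"
  have cov: "\<exists>i. i \<in> ?K \<and> x \<in> ball (fst i) (snd i) \<and> snd i < d" if "x \<in> S" "0 < d" for x d
  proof -
    obtain e where e: "e > 0" "ball x e \<subseteq> S" using S \<open>x \<in> S\<close> open_contains_ball by blast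
    show ?thesis
      by (rule exI[of _ "(x, min e (d/2))"]) (use e \<open>0 < d\<close> in auto)
  qed
  obtain C where C: "countable C" "C \<subseteq> ?K"
     "pairwise (\<lambda>i j. disjnt (ball (fst i) (snd i)) (ball (fst j) (snd j))) C"
     "negligible (S - (\<Union>i \<in> C. ball (fst i) (snd i)))"
    by (rule Vitali_covering_theorem_balls[of S ?K fst snd, OF cov])
  define B where "B i = ball (fst i) (snd i)" for i :: "'a \<times> real"
  define N where "N = S - (\<Union>i \<in> C. B i)"
  have SU: "S = (\<Union>i \<in> C. B i) \<union> N" using C(2) by (auto simp: N_def B_def)
  have Bs: "B i \<in> sets borel" for i by (simp add: B_def)
  have Ns: "N \<in> sets borel" unfolding N_def using S C(1) by (intro sets.Diff) (auto simp: B_def)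
  have Nn: "N \<in> null_sets lborel" using null_borel[OF Ns] C(4) by (simp add: N_def B_def)
  have disj: "disjoint_family_on B C" using C(3)
    unfolding disjoint_family_on_def pairwise_def B_def disjnt_def by metis
  have e1: "emeasure lborel S = (\<integral>\<^sup>+i. emeasure lborel (B i) \<partial>count_space C)"
  proof -
    have "emeasure lborel S = emeasure lborel (\<Union>i \<in> C. B i)"
      by (subst SU, rule emeasure_Un_null_set) (use C(1) Nn in \<open>auto simp: B_def\<close>)
    also have "\<dots> = (\<integral>\<^sup>+i. emeasure lborel (B i) \<partial>count_space C)"
      by (rule emeasure_UN_countable) (use C(1) disj Bs in auto)
    finally show ?thesis .
  qed
  define B' where "B' i = ball (f (fst i)) (snd i)" for i :: "'a \<times> real"
  have fB: "f ` B i = B' i" for i unfolding B_def B'_def by (rule image_orthogonal_transformation_ball[OF orth])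
  have B's: "B' i \<in> sets borel" for i by (simp add: B'_def)
  have fNs: "f ` N \<in> sets borel"
  proof -
    have "f ` N = f -` N" unfolding f_def using hrefl_vimage[OF u] by simp
    then show ?thesis using Ns by (simp add: f_def measurable_sets_borel[OF hrefl_meas])
  qed
  have fNn: "f ` N \<in> null_sets lborel"
  proof (rule null_borel[OF fNs])
    have "negligible N" using C(4) by (simp add: N_def B_def)
    moreover have "f differentiable_on N"
      using lin by (simp add: linear_linear bounded_linear_imp_differentiable_on)
    ultimately show "negligible (f ` N)"
      by (intro negligible_differentiable_image_negligible) auto
  qed
  have disj': "disjoint_family_on B' C"
    unfolding disjoint_family_on_def fB[symmetric] image_Int[OF inj, symmetric]
    using disj by (auto simp: disjoint_family_on_def)
  have eqB: "emeasure lborel (B' i) = emeasure lborel (B i)" for i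
  proof (cases "snd i \<ge> 0")
    case True
    have "emeasure lebesgue (B' i) = emeasure lebesgue (B i)"
      unfolding B'_def B_def by (simp only: emeasure_lebesgue_ball_conv_unit_ball[OF True])
    moreover have "emeasure lebesgue (B' i) = emeasure lborel (B' i)"
      by (simp add: B'_def)
    moreover have "emeasure lebesgue (B i) = emeasure lborel (B i)"
      by (simp add: B_def)
    ultimately show ?thesis by simp
  next
    case False
    then have "snd i \<le> 0" by simp
    then show ?thesis by (simp add: B_def B'_def ball_empty)
  qed
  have "hrefl u -` S = f ` S" unfolding f_def using hrefl_vimage[OF u] by simp
  also have "\<dots> = (\<Union>i \<in> C. B' i) \<union> f ` N"
    using SU by (simp add: image_Un image_UN fB)
  finally have eqS: "hrefl u -` S = (\<Union>i \<in> C. B' i) \<union> f ` N" .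
  have "emeasure lborel (hrefl u -` S) = emeasure lborel (\<Union>i \<in> C. B' i)"
    unfolding eqS by (rule emeasure_Un_null_set) (use C(1) fNn in \<open>auto simp: B'_def\<close>)
  also have "\<dots> = (\<integral>\<^sup>+i. emeasure lborel (B' i) \<partial>count_space C)"
    by (rule emeasure_UN_countable) (use C(1) disj' B's in auto)
  also have "\<dots> = emeasure lborel S" using e1 eqB by simp
  finally show ?thesis .
qed

lemma lborel_hrefl: assumes u: "norm u = 1"
  shows "distr lborel borel (hrefl u) = (lborel :: 'a::euclidean_space measure)"
proof (rule measure_eqI_generator_eq[where E="{S. open S}" and \<Omega>=UNIV and A="\<lambda>n. ball 0 (real n)"])
  show "Int_stable {S::'a set. open S}" by (auto simp: Int_stable_def)
  show "emeasure (distr lborel borel (hrefl u)) X = emeasure lborel X" if "X \<in> {S. open S}" for X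
    using that by (simp add: emeasure_distr borel_open lborel_open_inv[OF u])
  show "sets (distr lborel borel (hrefl u)) = sigma_sets UNIV {S::'a set. open S}" by (simp add: sets_borel)
  show "sets lborel = sigma_sets UNIV {S::'a set. open S}" by (simp add: sets_borel)
  show "range (\<lambda>n. ball 0 (real n)) \<subseteq> {S::'a set. open S}" by auto
  show "(\<Union>n. ball (0::'a) (real n)) = UNIV"
  proof (rule set_eqI)
    fix x :: 'a
    obtain n where "norm x < real n" using reals_Archimedean2 by blast
    then show "x \<in> (\<Union>n. ball 0 (real n)) \<longleftrightarrow> x \<in> UNIV" by auto
  qed
  show "emeasure (distr lborel borel (hrefl u)) (ball 0 (real n)) \<noteq> \<infinity>" for n
    using emeasure_lborel_ball_finite[of "0::'a" "real n"]
    by (simp add: emeasure_distr lborel_open_inv[OF u])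
qed auto

lemma lborel_refl_inv:
  fixes E :: "'a::euclidean_space set"
  assumes u: "norm u = 1" and E: "E \<in> sets borel"
  shows "emeasure lborel (hrefl u -` E) = emeasure lborel E"
proof -
  have "emeasure (distr lborel borel (hrefl u)) E = emeasure lborel (hrefl u -` E)"
    using E by (subst emeasure_distr) auto
  then show ?thesis using lborel_hrefl[OF u] by simp
qed

lemma su_refl_inv:
  assumes u: "norm u = 1"
  shows "distr sphere_unif borel (hrefl u) = (sphere_unif :: 'a::euclidean_space measure)"
proof (rule measure_eqI)
  fix A :: "'a set" assume "A \<in> sets (distr sphere_unif borel (hrefl u))"
  then have A: "A \<in> sets borel" by simp
  have HA: "hrefl u -` A \<in> sets borel" using A by (rule measurable_sets_borel[OF hrefl_meas])
  have NA: "ball 0 1 \<inter> ((\<lambda>x::'a. x /\<^sub>R norm x) -` A) \<in> sets borel"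
    using A by (auto intro!: measurable_sets_borel[OF nrm_meas])
  have eq: "ball 0 1 \<inter> ((\<lambda>x::'a. x /\<^sub>R norm x) -` (hrefl u -` A)) =
      hrefl u -` (ball 0 1 \<inter> ((\<lambda>x::'a. x /\<^sub>R norm x) -` A))"
  proof -
    have "\<And>x. hrefl u (x /\<^sub>R norm x) = hrefl u x /\<^sub>R norm (hrefl u x)"
      using linear_cmul[OF hrefl_linear[OF u]] u by simp
    then show ?thesis using u by auto
  qed
  show "emeasure (distr sphere_unif borel (hrefl u)) A = emeasure sphere_unif A"
  proof -
    have "emeasure (distr sphere_unif borel (hrefl u)) A = emeasure sphere_unif (hrefl u -` A)"
      using A by (subst emeasure_distr) auto
    also have "\<dots> = emeasure lborel (ball 0 1 \<inter> ((\<lambda>x::'a. x /\<^sub>R norm x) -` (hrefl u -` A))) / emeasure lborel (ball (0::'a) 1)"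
      by (rule su_emeasure[OF HA])
    also have "\<dots> = emeasure lborel (ball 0 1 \<inter> ((\<lambda>x::'a. x /\<^sub>R norm x) -` A)) / emeasure lborel (ball (0::'a) 1)"
      by (simp only: eq lborel_refl_inv[OF u NA])
    also have "\<dots> = emeasure sphere_unif A" by (rule su_emeasure[OF A, symmetric])
    finally show ?thesis .
  qed
qed simp

lemma ball_pos_gen: "r > 0 \<Longrightarrow> emeasure lborel (ball (c::'a::euclidean_space) r) > 0"
proof -
  assume "r > 0"
  then have "0 < measure lborel (ball c r)" using content_ball_pos[of r c] by simp
  then show ?thesis using emeasure_lborel_ball_finite[of c r]
    by (simp add: emeasure_eq_ennreal_measure)
qed

lemma su_pos:
  fixes V :: "'a::euclidean_space set"
  assumes V: "open V" "w \<in> V" and w: "norm w = 1"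
  shows "emeasure sphere_unif (V \<inter> sphere 0 1) > 0"
proof -
  let ?N = "\<lambda>x::'a. x /\<^sub>R norm x"
  obtain d where d: "d > 0" "ball w d \<subseteq> V" using V open_contains_ball by blast
  have "isCont ?N (w /\<^sub>R 2)" using w by (intro continuous_intros) auto
  then obtain e where e: "e > 0" "\<And>x. dist x (w /\<^sub>R 2) < e \<Longrightarrow> dist (?N x) (?N (w /\<^sub>R 2)) < d"
    unfolding continuous_at_eps_delta using d(1) by blast
  have Nw: "?N (w /\<^sub>R 2) = w" using w by simp
  define e' where "e' = min e (1/2)"
  have e': "e' > 0" using e(1) by (simp add: e'_def)
  have sub: "ball (w /\<^sub>R 2) e' \<subseteq> ball 0 1 \<inter> (?N -` (V \<inter> sphere 0 1))"
  proof
    fix x assume x: "x \<in> ball (w /\<^sub>R 2) e'"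
    then have dx: "dist x (w /\<^sub>R 2) < e'" by (simp add: dist_commute)
    have nw2: "norm (w /\<^sub>R 2) = 1/2" using w by simp
    have "norm x \<le> norm (w /\<^sub>R 2) + dist x (w /\<^sub>R 2)"
      by (metis dist_norm norm_triangle_sub)
    then have n1: "norm x < 1" using dx nw2 e'_def by linarith
    have "norm (w /\<^sub>R 2) \<le> norm x + dist x (w /\<^sub>R 2)"
      by (metis dist_commute dist_norm norm_triangle_sub)
    then have n0: "norm x > 0" using dx nw2 e'_def by linarith
    have "dist (?N x) w < d" using e(2)[of x] dx Nw e'_def by simp
    then have "?N x \<in> V" using d(2) by (auto simp: dist_commute)
    moreover have "norm (?N x) = 1" using n0 by simp
    ultimately show "x \<in> ball 0 1 \<inter> (?N -` (V \<inter> sphere 0 1))" using n1 by simp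
  qed
  have A: "V \<inter> sphere 0 1 \<in> sets borel" using V by auto
  have "0 < emeasure lborel (ball (w /\<^sub>R 2) e')" by (rule ball_pos_gen[OF e'])
  also have "\<dots> \<le> emeasure lborel (ball 0 1 \<inter> (?N -` (V \<inter> sphere 0 1)))"
  proof (rule emeasure_mono[OF sub])
    have "?N -` (V \<inter> sphere 0 1) \<in> sets borel" by (rule measurable_sets_borel[OF nrm_meas A])
    then show "ball 0 1 \<inter> (?N -` (V \<inter> sphere 0 1)) \<in> sets lborel" by simp
  qed
  finally have pos: "0 < emeasure lborel (ball 0 1 \<inter> (?N -` (V \<inter> sphere 0 1)))" .
  show ?thesis
    unfolding su_emeasure[OF A] ennreal_zero_less_divide
    using pos emeasure_lborel_ball_finite[of "0::'a" 1] by simp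
qed

lemma dk_meas[measurable]: "disk_kernel r z \<in> borel_measurable borel"
  unfolding disk_kernel_def by measurable

lemma sphere_pred[measurable]: "Measurable.pred borel (\<lambda>x::'a::euclidean_space. x \<in> sphere 0 1)"
  unfolding pred_def by (simp add: borel_closed)

lemma dk_01: "0 \<le> disk_kernel r z y" "disk_kernel r z y \<le> 1"
  by (auto simp: disk_kernel_def)

lemma dk_hrefl: "norm u = 1 \<Longrightarrow> disk_kernel r (hrefl u z) (hrefl u y) = disk_kernel r z y"
  by (simp add: disk_kernel_def hrefl_dist)
lemma dk_hrefl2: "norm u = 1 \<Longrightarrow> disk_kernel r z (hrefl u y) = disk_kernel r (hrefl u z) y"
  by (simp add: disk_kernel_def hrefl_dist2)

lemma su_meas_eq: "borel_measurable (sphere_unif :: 'a::euclidean_space measure) = borel_measurable borel"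
  by (rule measurable_cong_sets) simp_all

lemma su_inv_integral:
  fixes F :: "'a::euclidean_space \<Rightarrow> real"
  assumes u: "norm u = 1" and F: "F \<in> borel_measurable borel"
  shows "(\<integral>y. F (hrefl u y) \<partial>sphere_unif) = (\<integral>y. F y \<partial>sphere_unif)"
proof -
  have "integral\<^sup>L (distr sphere_unif borel (hrefl u)) F = (\<integral>y. F (hrefl u y) \<partial>sphere_unif)"
    by (rule integral_distr) (use F in auto)
  then show ?thesis using su_refl_inv[OF u] by simp
qed

lemma su_integrable:
  fixes F :: "'a::euclidean_space \<Rightarrow> real"
  assumes F: "F \<in> borel_measurable borel" and B: "\<And>y. \<bar>F y\<bar> \<le> B"
  shows "integrable sphere_unif F"
proof -
  interpret prob_space "sphere_unif :: 'a measure" by (rule su_prob)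
  show ?thesis
    by (rule integrable_const_bound[where B=B]) (use F B in \<open>auto simp: su_meas_eq\<close>)
qed

locale vsetup =
  fixes r \<rho> :: real and x0 :: "'a::euclidean_space" and v0 :: "'a \<Rightarrow> real"
  assumes r: "0 < r" "r < 1"
    and rho: "\<rho> > 0"
    and x0: "x0 \<in> sphere 0 1"
    and meas: "v0 \<in> borel_measurable (sphere_unif :: 'a measure)"
    and range: "\<forall>x\<in>sphere 0 1. 0 \<le> v0 x \<and> v0 x \<le> 1"
    and on_src: "\<forall>x\<in>sphere 0 1. dist x x0 \<le> r \<longrightarrow> v0 x = 1"
    and eqn: "\<forall>x\<in>sphere 0 1. \<not> dist x x0 \<le> r \<longrightarrow>
       v0 x = ((LINT y:{y\<in>sphere 0 1. dist y x0 \<le> r}|sphere_unif. disk_kernel r x y)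
             + (LINT y:{y\<in>sphere 0 1. \<not> dist y x0 \<le> r}|sphere_unif. v0 y * disk_kernel r x y))
             / (\<rho> + (LINT y:sphere 0 1|sphere_unif. disk_kernel r x y))"
begin

definition vv where "vv y = indicator (sphere 0 1) y * v0 y"
definition KK where "KK (z::'a) = (\<integral>y. indicator (sphere 0 1) y * disk_kernel r z y \<partial>sphere_unif)"
definition NN where "NN z = (\<integral>y. vv y * disk_kernel r z y \<partial>sphere_unif)"

lemma v0_meas[measurable]: "v0 \<in> borel_measurable borel"
  using meas by (simp add: su_meas_eq)
lemma vv_meas[measurable]: "vv \<in> borel_measurable borel"
  unfolding vv_def by measurable
lemma vv_01: "0 \<le> vv y" "vv y \<le> 1"
  using range by (auto simp: vv_def indicator_def)
lemma vv_S: "y \<in> sphere 0 1 \<Longrightarrow> vv y = v0 y" "y \<notin> sphere 0 1 \<Longrightarrow> vv y = 0"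
  by (auto simp: vv_def)

lemma int_kS: "integrable sphere_unif (\<lambda>y. indicator (sphere 0 1) y * disk_kernel r z y)"
  by (rule su_integrable[where B=1]) (auto simp: disk_kernel_def indicator_def)
lemma int_vk: "integrable sphere_unif (\<lambda>y. vv y * disk_kernel r z y)"
  by (rule su_integrable[where B=1]) (use vv_01 in \<open>auto simp: disk_kernel_def\<close>)

lemma KK_01: "0 \<le> KK z" "KK z \<le> 1"
proof -
  interpret prob_space "sphere_unif :: 'a measure" by (rule su_prob)
  show "0 \<le> KK z" unfolding KK_def by (rule integral_nonneg_AE) (auto simp: disk_kernel_def)
  have i1: "integrable (sphere_unif :: 'a measure) (\<lambda>_. 1::real)" by (rule su_integrable[where B=1]) auto
  have "KK z \<le> (\<integral>y. 1 \<partial>(sphere_unif :: 'a measure))" unfolding KK_def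
    by (rule Bochner_Integration.integral_mono[OF int_kS i1]) (auto simp: disk_kernel_def indicator_def)
  then show "KK z \<le> 1" using prob_space by simp
qed

lemma eqn': assumes "x \<in> sphere 0 1" "\<not> dist x x0 \<le> r" shows "v0 x = NN x / (\<rho> + KK x)"
proof -
  have i1: "integrable sphere_unif (\<lambda>y. indicator {y\<in>sphere 0 1. dist y x0 \<le> r} y * disk_kernel r x y)"
    by (rule su_integrable[where B=1]) (auto simp: disk_kernel_def indicator_def)
  have i2: "integrable sphere_unif (\<lambda>y. indicator {y\<in>sphere 0 1. \<not> dist y x0 \<le> r} y * (v0 y * disk_kernel r x y))"
    by (rule su_integrable[where B=1]) (use range in \<open>auto simp: disk_kernel_def indicator_def\<close>)
  have "(LINT y:{y\<in>sphere 0 1. dist y x0 \<le> r}|sphere_unif. disk_kernel r x y)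
       + (LINT y:{y\<in>sphere 0 1. \<not> dist y x0 \<le> r}|sphere_unif. v0 y * disk_kernel r x y)
      = (\<integral>y. indicator {y\<in>sphere 0 1. dist y x0 \<le> r} y * disk_kernel r x y
           + indicator {y\<in>sphere 0 1. \<not> dist y x0 \<le> r} y * (v0 y * disk_kernel r x y) \<partial>sphere_unif)"
    unfolding set_lebesgue_integral_def using Bochner_Integration.integral_add[OF i1 i2] by simp
  also have "\<dots> = NN x" unfolding NN_def
    by (rule Bochner_Integration.integral_cong) (use on_src in \<open>auto simp: vv_def indicator_def\<close>)
  finally have 1: "(LINT y:{y\<in>sphere 0 1. dist y x0 \<le> r}|sphere_unif. disk_kernel r x y)
       + (LINT y:{y\<in>sphere 0 1. \<not> dist y x0 \<le> r}|sphere_unif. v0 y * disk_kernel r x y) = NN x" .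
  have 2: "(LINT y:sphere 0 1|sphere_unif. disk_kernel r x y) = KK x"
    unfolding set_lebesgue_integral_def KK_def by simp
  show ?thesis using eqn assms 1 2 by simp
qed

context fixes u :: 'a assumes u: "norm u = 1"
begin

lemma KK_hrefl: "KK (hrefl u z) = KK z"
proof -
  have "KK z = (\<integral>y. indicator (sphere 0 1) (hrefl u y) * disk_kernel r z (hrefl u y) \<partial>sphere_unif)"
    unfolding KK_def by (rule su_inv_integral[OF u, symmetric]) measurable
  also have "\<dots> = KK (hrefl u z)" unfolding KK_def
    by (rule Bochner_Integration.integral_cong) (auto simp: dk_hrefl2[OF u] indicator_def hrefl_norm[OF u])
  finally show ?thesis by simp
qed

lemma NN_diff: "NN z - NN (hrefl u z) =
   (\<integral>y. (vv y - vv (hrefl u y)) * (disk_kernel r z y - disk_kernel r (hrefl u z) y) \<partial>sphere_unif) / 2"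
proof -
  define C where "C y = disk_kernel r z y - disk_kernel r (hrefl u z) y" for y
  have Cm[measurable]: "C \<in> borel_measurable borel" unfolding C_def by measurable
  have CH: "C (hrefl u y) = - C y" for y
    unfolding C_def using dk_hrefl2[of u r z y, OF u] dk_hrefl[of u r z y, OF u] by simp
  have iD: "integrable sphere_unif (\<lambda>y. vv y * C y)"
    by (rule su_integrable[where B=1]) (use vv_01 in \<open>auto simp: C_def disk_kernel_def\<close>)
  have iD2: "integrable sphere_unif (\<lambda>y. vv (hrefl u y) * C y)"
    by (rule su_integrable[where B=1]) (use vv_01 in \<open>auto simp: C_def disk_kernel_def\<close>)
  have 1: "NN z - NN (hrefl u z) = (\<integral>y. vv y * C y \<partial>sphere_unif)"
    unfolding NN_def C_def by (simp add: Bochner_Integration.integral_diff[OF int_vk int_vk, symmetric] algebra_simps)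
  have "(\<integral>y. vv y * C y \<partial>sphere_unif) = (\<integral>y. vv (hrefl u y) * C (hrefl u y) \<partial>sphere_unif)"
    by (rule su_inv_integral[OF u, symmetric]) measurable
  also have "\<dots> = - (\<integral>y. vv (hrefl u y) * C y \<partial>sphere_unif)"
    by (simp add: CH)
  finally have 2: "(\<integral>y. vv (hrefl u y) * C y \<partial>sphere_unif) = - (\<integral>y. vv y * C y \<partial>sphere_unif)" by simp
  have "(\<integral>y. (vv y - vv (hrefl u y)) * C y \<partial>sphere_unif)
      = (\<integral>y. vv y * C y - vv (hrefl u y) * C y \<partial>sphere_unif)"
    by (rule Bochner_Integration.integral_cong) (simp_all add: algebra_simps)
  also have "\<dots> = (\<integral>y. vv y * C y \<partial>sphere_unif) - (\<integral>y. vv (hrefl u y) * C y \<partial>sphere_unif)"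
    by (rule Bochner_Integration.integral_diff[OF iD iD2])
  finally have 3: "(\<integral>y. (vv y - vv (hrefl u y)) * C y \<partial>sphere_unif)
      = (\<integral>y. vv y * C y \<partial>sphere_unif) - (\<integral>y. vv (hrefl u y) * C y \<partial>sphere_unif)" .
  show ?thesis using 1 2 3 by (simp add: C_def)
qed


context assumes x0u: "x0 \<bullet> u \<ge> 0"
begin

definition GG where "GG y = vv y - vv (hrefl u y)"
definition CC where "CC z y = disk_kernel r z y - disk_kernel r (hrefl u z) y"

lemma GG_meas[measurable]: "GG \<in> borel_measurable borel" unfolding GG_def by measurable
lemma CC_meas[measurable]: "CC z \<in> borel_measurable borel" unfolding CC_def by measurable

lemma GG_H: "GG (hrefl u y) = - GG y" unfolding GG_def using u by simp
lemma CC_H: "CC z (hrefl u y) = - CC z y"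
  unfolding CC_def using dk_hrefl2[of u r z y, OF u] dk_hrefl[of u r z y, OF u] by simp
lemma GG_out: "y \<notin> sphere 0 1 \<Longrightarrow> GG y = 0"
  unfolding GG_def using u by (simp add: vv_S)
lemma GG_lb: "GG y \<ge> -1" using vv_01[of y] vv_01[of "hrefl u y"] by (simp add: GG_def)

lemma pw_aux:
  assumes m: "m \<le> 0" and lb: "\<forall>y\<in>sphere 0 1. y \<bullet> u \<ge> 0 \<longrightarrow> GG y \<ge> m"
    and z: "z \<bullet> u \<ge> 0" and y: "y \<in> sphere 0 1" "y \<bullet> u \<ge> 0"
  shows "GG y * CC z y \<ge> m * (disk_kernel r z y + disk_kernel r (hrefl u z) y)"
proof -
  have "dist z y \<le> dist (hrefl u z) y" by (rule hrefl_side[OF u z y(2)])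
  then have C0: "CC z y \<ge> 0" unfolding CC_def disk_kernel_def by auto
  have C1: "CC z y \<le> disk_kernel r z y + disk_kernel r (hrefl u z) y"
    unfolding CC_def using dk_01[of r "hrefl u z" y] by simp
  have "GG y \<ge> m" using lb y by auto
  then have "GG y * CC z y \<ge> m * CC z y" using C0 by (simp add: mult_right_mono)
  moreover have "m * CC z y \<ge> m * (disk_kernel r z y + disk_kernel r (hrefl u z) y)"
    using C1 m by (simp add: mult_left_mono_neg)
  ultimately show ?thesis by linarith
qed

lemma pw_bound:
  assumes m: "m \<le> 0" and lb: "\<forall>y\<in>sphere 0 1. y \<bullet> u \<ge> 0 \<longrightarrow> GG y \<ge> m"
    and z: "z \<bullet> u \<ge> 0"
  shows "GG y * CC z y \<ge> m * (indicator (sphere 0 1) y * (disk_kernel r z y + disk_kernel r (hrefl u z) y))"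
proof (cases "y \<in> sphere 0 1")
  case False
  then show ?thesis by (simp add: GG_out)
next
  case True
  show ?thesis
  proof (cases "y \<bullet> u \<ge> 0")
    case True
    then show ?thesis using pw_aux[OF m lb z \<open>y \<in> sphere 0 1\<close>] \<open>y \<in> sphere 0 1\<close> by simp
  next
    case False
    let ?y = "hrefl u y"
    have y1: "?y \<in> sphere 0 1" using \<open>y \<in> sphere 0 1\<close> u by simp
    have y2: "?y \<bullet> u \<ge> 0" using False hrefl_u[OF u, of y] by simp
    have "GG ?y * CC z ?y \<ge> m * (disk_kernel r z ?y + disk_kernel r (hrefl u z) ?y)"
      by (rule pw_aux[OF m lb z y1 y2])
    moreover have "GG ?y * CC z ?y = GG y * CC z y" by (simp add: GG_H CC_H)
    moreover have "disk_kernel r z ?y + disk_kernel r (hrefl u z) ?y = disk_kernel r z y + disk_kernel r (hrefl u z) y"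
      using dk_hrefl2[of u r z y, OF u] dk_hrefl[of u r z y, OF u] by simp
    ultimately show ?thesis using \<open>y \<in> sphere 0 1\<close> by simp
  qed
qed

lemma int_GC: "integrable sphere_unif (\<lambda>y. GG y * CC z y)"
proof (rule su_integrable[where B=1])
  fix y
  have a: "\<bar>GG y\<bar> \<le> 1" using vv_01[of y] vv_01[of "hrefl u y"] by (simp add: GG_def abs_le_iff)
  have b: "\<bar>CC z y\<bar> \<le> 1" by (simp add: CC_def disk_kernel_def)
  show "\<bar>GG y * CC z y\<bar> \<le> 1" unfolding abs_mult using a b by (intro mult_le_one) auto
qed measurable

lemma NN_bound:
  assumes m: "m \<le> 0" and lb: "\<forall>y\<in>sphere 0 1. y \<bullet> u \<ge> 0 \<longrightarrow> GG y \<ge> m"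
    and z: "z \<bullet> u \<ge> 0"
  shows "NN z - NN (hrefl u z) \<ge> m * KK z"
proof -
  have i2: "integrable sphere_unif (\<lambda>y. m * (indicator (sphere 0 1) y * disk_kernel r z y)
      + m * (indicator (sphere 0 1) y * disk_kernel r (hrefl u z) y))"
    by (intro Bochner_Integration.integrable_add integrable_mult_right int_kS)
  have "(\<integral>y. m * (indicator (sphere 0 1) y * disk_kernel r z y)
      + m * (indicator (sphere 0 1) y * disk_kernel r (hrefl u z) y) \<partial>sphere_unif)
      \<le> (\<integral>y. GG y * CC z y \<partial>sphere_unif)"
    by (rule Bochner_Integration.integral_mono[OF i2 int_GC])
       (use pw_bound[OF m lb z] in \<open>simp add: algebra_simps\<close>)
  also have "(\<integral>y. m * (indicator (sphere 0 1) y * disk_kernel r z y)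
      + m * (indicator (sphere 0 1) y * disk_kernel r (hrefl u z) y) \<partial>sphere_unif)
      = m * KK z + m * KK (hrefl u z)"
    unfolding KK_def
    by (simp add: Bochner_Integration.integral_add[OF integrable_mult_right[OF int_kS] integrable_mult_right[OF int_kS]])
  finally have "2 * (m * KK z) \<le> (\<integral>y. GG y * CC z y \<partial>sphere_unif)"
    using KK_hrefl[of z] by simp
  then show ?thesis using NN_diff[of z] by (simp add: GG_def CC_def)
qed

lemma G_nonneg_on_half:
  "\<forall>z\<in>sphere 0 1. z \<bullet> u \<ge> 0 \<longrightarrow> GG z \<ge> 0"
proof -
  define SP where "SP = {z\<in>sphere 0 1. z \<bullet> u \<ge> 0}"
  define m where "m = Inf (GG ` SP)"
  define m' where "m' = min m 0"
  have x0SP: "x0 \<in> SP" using x0 x0u by (simp add: SP_def)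
  have bdd: "bdd_below (GG ` SP)" by (meson bdd_belowI2 GG_lb)
  have m_le: "m \<le> GG y" if "y \<in> SP" for y
    unfolding m_def using bdd that by (simp add: cInf_lower)
  have m'0: "m' \<le> 0" by (simp add: m'_def)
  have lb: "\<forall>y\<in>sphere 0 1. y \<bullet> u \<ge> 0 \<longrightarrow> GG y \<ge> m'"
    using m_le by (auto simp: SP_def m'_def min_le_iff_disj)
  have key: "GG z \<ge> m' / (1 + \<rho>)" if zSP: "z \<in> SP" for z
  proof -
    have zS: "z \<in> sphere 0 1" and zu: "z \<bullet> u \<ge> 0" using zSP by (auto simp: SP_def)
    have neg: "m' / (1 + \<rho>) \<le> 0" using m'0 rho by (simp add: divide_nonpos_pos)
    show ?thesis
    proof (cases "dist z x0 \<le> r")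
      case True
      then have "vv z = 1" using on_src zS by (simp add: vv_S)
      then have "GG z \<ge> 0" using vv_01[of "hrefl u z"] by (simp add: GG_def)
      then show ?thesis using neg by linarith
    next
      case False
      have HzS: "hrefl u z \<in> sphere 0 1" using zS u by simp
      have "dist z x0 \<le> dist (hrefl u z) x0" by (rule hrefl_side[OF u zu x0u])
      then have HzF: "\<not> dist (hrefl u z) x0 \<le> r" using False by linarith
      define K where "K = KK z"
      have K01: "0 \<le> K" "K \<le> 1" using KK_01 by (auto simp: K_def)
      have pos: "\<rho> + K > 0" using rho K01 by linarith
      have "vv z = NN z / (\<rho> + K)" using eqn'[OF zS False] zS by (simp add: vv_S K_def)
      moreover have "vv (hrefl u z) = NN (hrefl u z) / (\<rho> + K)"
        using eqn'[OF HzS HzF] HzS KK_hrefl[of z] by (simp add: vv_S K_def)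
      ultimately have Gz: "GG z = (NN z - NN (hrefl u z)) / (\<rho> + K)"
        by (simp add: GG_def diff_divide_distrib)
      have "m' * K \<le> NN z - NN (hrefl u z)" using NN_bound[OF m'0 lb zu] by (simp add: K_def)
      then have 1: "m' * K / (\<rho> + K) \<le> GG z" unfolding Gz using pos by (simp add: divide_right_mono)
      have h: "m' * (\<rho> + K) \<le> m' * K * (1 + \<rho>)"
      proof -
        have "0 \<le> m' * (\<rho> * (K - 1))"
          using m'0 rho K01 by (intro mult_nonpos_nonpos) (auto simp: mult_nonneg_nonpos)
        then show ?thesis by (simp add: algebra_simps)
      qed
      have "m' / (1 + \<rho>) = m' * (\<rho> + K) / ((1 + \<rho>) * (\<rho> + K))" using pos rho by simp
      also have "\<dots> \<le> m' * K * (1 + \<rho>) / ((1 + \<rho>) * (\<rho> + K))"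
        using h pos rho by (intro divide_right_mono) auto
      also have "\<dots> = m' * K / (\<rho> + K)" using pos rho by simp
      finally show ?thesis using 1 by linarith
    qed
  qed
  have "m' / (1 + \<rho>) \<le> m" unfolding m_def
    using x0SP key by (intro cInf_greatest) auto
  have "m \<ge> 0"
  proof (rule ccontr)
    assume "\<not> m \<ge> 0"
    then have mm: "m' = m" "m < 0" by (auto simp: m'_def)
    have "m / (1 + \<rho>) > m" using mm rho by (simp add: divide_less_eq field_simps mult_pos_neg)
    then show False using \<open>m' / (1 + \<rho>) \<le> m\<close> mm by simp
  qed
  then show ?thesis using m_le by (force simp: SP_def)
qed

lemma GC_nonneg: assumes z: "z \<bullet> u \<ge> 0" shows "GG y * CC z y \<ge> 0"
  using pw_bound[of 0 z y] G_nonneg_on_half z by simp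

lemma strict_contra:
  assumes zS: "z \<in> sphere 0 1" and zu: "z \<bullet> u \<ge> 0" and zF: "\<not> dist z x0 \<le> r"
    and G0: "GG z = 0"
    and V: "open V" "w \<in> V" "w \<in> sphere 0 1"
    and pos: "\<forall>y\<in>V \<inter> sphere 0 1. GG y * CC z y > 0"
  shows False
proof -
  have HzS: "hrefl u z \<in> sphere 0 1" using zS u by simp
  have "dist z x0 \<le> dist (hrefl u z) x0" by (rule hrefl_side[OF u zu x0u])
  then have HzF: "\<not> dist (hrefl u z) x0 \<le> r" using zF by linarith
  have pos': "\<rho> + KK z > 0" using rho KK_01[of z] by linarith
  have "vv z = NN z / (\<rho> + KK z)" using eqn'[OF zS zF] zS by (simp add: vv_S)
  moreover have "vv (hrefl u z) = NN (hrefl u z) / (\<rho> + KK z)"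
    using eqn'[OF HzS HzF] HzS KK_hrefl[of z] by (simp add: vv_S)
  ultimately have "NN z - NN (hrefl u z) = 0" using G0 pos' by (simp add: GG_def diff_divide_distrib)
  then have I0: "(\<integral>y. GG y * CC z y \<partial>sphere_unif) = 0" using NN_diff[of z] by (simp add: GG_def CC_def)
  have "AE y in sphere_unif. GG y * CC z y = 0"
    using I0 integral_nonneg_eq_0_iff_AE[OF int_GC, of z] GC_nonneg[OF zu] by simp
  then obtain N where N: "{y \<in> space sphere_unif. \<not> GG y * CC z y = 0} \<subseteq> N"
      "emeasure sphere_unif N = 0" "N \<in> sets sphere_unif"
    by (rule AE_E)
  have sub: "V \<inter> sphere 0 1 \<subseteq> N"
  proof
    fix y assume "y \<in> V \<inter> sphere 0 1"
    then have "GG y * CC z y \<noteq> 0" using pos by force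
    then show "y \<in> N" using N(1) by auto
  qed
  have "emeasure sphere_unif (V \<inter> sphere 0 1) \<le> emeasure sphere_unif N"
    by (rule emeasure_mono[OF sub N(3)])
  then have "emeasure sphere_unif (V \<inter> sphere 0 1) = 0" using N(2) by auto
  then show False using su_pos[OF V(1,2)] V(3) by simp
qed

end
end
end

lemma trig1: "cos (t::real) - 2 * sin (m - t) * sin m = cos (2*m - t)"
proof -
  have 1: "cos t = cos m * cos (m-t) + sin m * sin (m-t)" using cos_diff[of m "m-t"] by simp
  have e: "2*m - t = m + (m - t)" by simp
  have 2: "cos (2*m-t) = cos m * cos (m-t) - sin m * sin (m-t)" unfolding e by (rule cos_add)
  show ?thesis using 1 2 by simp
qed

lemma trig2: "sin (t::real) + 2 * sin (m - t) * cos m = sin (2*m - t)"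
proof -
  have 1: "sin t = sin m * cos (m-t) - cos m * sin (m-t)" using sin_diff[of m "m-t"] by simp
  have e: "2*m - t = m + (m - t)" by simp
  have 2: "sin (2*m-t) = sin m * cos (m-t) + cos m * sin (m-t)" unfolding e by (rule sin_add)
  show ?thesis using 1 2 by simp
qed

lemma cos_lt_aux: assumes "0 \<le> (s::real)" "s \<le> pi" "s < t" "t < 2*pi - s" shows "cos t < cos s"
proof (cases "t \<le> pi")
  case True then show ?thesis using assms by (intro cos_monotone_0_pi) auto
next
  case False
  have "cos t = cos (2*pi - t)" by (simp add: cos_diff)
  also have "\<dots> < cos s" using assms False by (intro cos_monotone_0_pi) auto
  finally show ?thesis .
qed

definition Pt :: "'a::euclidean_space \<Rightarrow> 'a \<Rightarrow> real \<Rightarrow> 'a" where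
  "Pt x0 e t = cos t *\<^sub>R x0 + sin t *\<^sub>R e"
definition uv :: "'a::euclidean_space \<Rightarrow> 'a \<Rightarrow> real \<Rightarrow> 'a" where
  "uv x0 e m = sin m *\<^sub>R x0 - cos m *\<^sub>R e"

context fixes x0 e :: "'a::euclidean_space"
  assumes x0n: "norm x0 = 1" and en: "norm e = 1" and ex0: "e \<bullet> x0 = 0"
begin
lemma xx: "x0 \<bullet> x0 = 1" using x0n by (simp add: norm_eq_1)
lemma ee: "e \<bullet> e = 1" using en by (simp add: norm_eq_1)
lemma xe: "x0 \<bullet> e = 0" using ex0 by (simp add: inner_commute)

lemma Pt_inner: "Pt x0 e s \<bullet> Pt x0 e t = cos (s - t)"
  using xx ee ex0 xe by (simp add: Pt_def inner_add_left inner_add_right cos_diff algebra_simps)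
lemma Pt_x0: "x0 \<bullet> Pt x0 e t = cos t"
  using xx xe by (simp add: Pt_def inner_add_right)
lemma Pt_norm: "norm (Pt x0 e t) = 1"
proof -
  have "Pt x0 e t \<bullet> Pt x0 e t = 1" using Pt_inner[of t t] by simp
  then show ?thesis by (simp add: norm_eq_1)
qed
lemma Pt_dist2: "(dist (Pt x0 e s) (Pt x0 e t))^2 = 2 - 2 * cos (s - t)"
  unfolding dist_norm power2_norm_eq_inner
  using Pt_inner[of s t] Pt_inner[of s s] Pt_inner[of t t] Pt_inner[of t s]
  by (simp add: inner_diff_left inner_diff_right cos_diff algebra_simps)
lemma Pt_x0_dist2: "(dist (Pt x0 e t) x0)^2 = 2 - 2 * cos t"
  unfolding dist_norm power2_norm_eq_inner
  using Pt_x0[of t] xx Pt_inner[of t t] by (simp add: inner_diff_left inner_diff_right inner_commute)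

lemma uv_norm: "norm (uv x0 e m) = 1"
proof -
  have "uv x0 e m \<bullet> uv x0 e m = (sin m)^2 + (cos m)^2"
    using xx ee ex0 xe by (simp add: uv_def inner_diff_left inner_diff_right power2_eq_square)
  then show ?thesis by (simp add: norm_eq_1)
qed
lemma uv_x0: "x0 \<bullet> uv x0 e m = sin m"
  using xx xe by (simp add: uv_def inner_diff_right)
lemma Pt_uv: "Pt x0 e t \<bullet> uv x0 e m = sin (m - t)"
  using xx ee ex0 xe by (simp add: Pt_def uv_def inner_add_left inner_diff_right sin_diff algebra_simps)

lemma hrefl_Pt: "hrefl (uv x0 e m) (Pt x0 e t) = Pt x0 e (2*m - t)"
proof -
  have "hrefl (uv x0 e m) (Pt x0 e t) = (cos t - 2 * sin (m - t) * sin m) *\<^sub>R x0 + (sin t + 2 * sin (m - t) * cos m) *\<^sub>R e"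
    unfolding hrefl_def Pt_uv by (simp add: Pt_def uv_def algebra_simps)
  then show ?thesis unfolding trig1 trig2 by (simp add: Pt_def)
qed
end

lemma hrefl_neg: "hrefl (-u) = hrefl u" by (auto simp: hrefl_def fun_eq_iff)

lemma inner_le1: "norm (x::'a::euclidean_space) = 1 \<Longrightarrow> norm y = 1 \<Longrightarrow> -1 \<le> x \<bullet> y \<and> x \<bullet> y \<le> 1"
  using Cauchy_Schwarz_ineq2[of x y] by (simp add: abs_le_iff)

context vsetup
begin

definition rr where "rr = arccos (1 - r^2/2)"

lemma rr_facts: "cos rr = 1 - r^2/2" "0 < rr" "rr < pi/2"
proof -
  have r2: "0 < r^2" "r^2 < 1" using r by (auto simp: power_less_one_iff)
  then show "cos rr = 1 - r^2/2" unfolding rr_def by (intro cos_arccos) auto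
  have "arccos 1 < arccos (1 - r^2/2)" using r2 by (intro arccos_less_arccos) auto
  then show "0 < rr" by (simp add: rr_def)
  have "arccos (1 - r^2/2) < arccos 0" using r2 by (intro arccos_less_arccos) auto
  then show "rr < pi/2" by (simp add: rr_def)
qed

lemma G_mono: assumes u: "norm u = 1" "x0 \<bullet> u \<ge> 0" and z: "z \<in> sphere 0 1" "z \<bullet> u \<ge> 0"
  shows "v0 (hrefl u z) \<le> v0 z"
proof -
  have "GG u z \<ge> 0" using G_nonneg_on_half[OF u] z by blast
  moreover have "hrefl u z \<in> sphere 0 1" using z u by simp
  moreover have "GG u z = vv z - vv (hrefl u z)" by (rule GG_def[OF u])
  ultimately show ?thesis using z by (simp add: vv_S)
qed

lemma NN_le_KK: "NN x \<le> KK x"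
  unfolding NN_def KK_def
  by (rule Bochner_Integration.integral_mono[OF int_vk int_kS])
     (use range in \<open>auto simp: vv_def indicator_def disk_kernel_def\<close>)

lemma v0_lt1: assumes "x \<in> sphere 0 1" "\<not> dist x x0 \<le> r" shows "v0 x < 1"
proof -
  have K: "0 \<le> KK x" "KK x \<le> 1" by (rule KK_01)+
  have "v0 x = NN x / (\<rho> + KK x)" by (rule eqn'[OF assms])
  also have "\<dots> \<le> KK x / (\<rho> + KK x)" using NN_le_KK[of x] K rho by (intro divide_right_mono) auto
  also have "\<dots> < 1" using K rho by simp
  finally show ?thesis .
qed

context fixes e :: 'a assumes en: "norm e = 1" and ex0: "e \<bullet> x0 = 0"
begin

lemma x0n: "norm x0 = 1" using x0 by simp

definition ff where "ff \<phi> = v0 (Pt x0 e \<phi>)"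

lemma PtS: "Pt x0 e t \<in> sphere 0 1" using Pt_norm[OF x0n en ex0] by simp

lemma ff01: "0 \<le> ff t" "ff t \<le> 1" using range PtS[of t] by (auto simp: ff_def)

lemma sym: assumes xS: "x \<in> sphere 0 1" shows "v0 x = ff (arccos (x0 \<bullet> x))"
proof -
  define c where "c = x0 \<bullet> x"
  have c1: "-1 \<le> c" "c \<le> 1" using inner_le1[OF x0n, of x] xS by (auto simp: c_def)
  define p where "p = Pt x0 e (arccos c)"
  have pS: "p \<in> sphere 0 1" unfolding p_def by (rule PtS)
  have x0p: "x0 \<bullet> p = c" using Pt_x0[OF x0n en ex0] c1 by (simp add: p_def)
  show ?thesis
  proof (cases "x = p")
    case True then show ?thesis by (simp add: ff_def p_def c_def)
  next
    case False
    define d where "d = x - p"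
    define nd where "nd = norm d"
    have ndp: "nd > 0" using False by (simp add: nd_def d_def)
    define u where "u = d /\<^sub>R nd"
    have un: "norm u = 1" using ndp by (simp add: u_def nd_def)
    have xx: "x \<bullet> x = 1" using xS by (simp add: norm_eq_1)
    have pp: "p \<bullet> p = 1" using pS by (simp add: norm_eq_1)
    have dd: "d \<bullet> d = 2 * (x \<bullet> d)" using xx pp
      by (simp add: d_def inner_diff_left inner_diff_right inner_commute)
    have nd2: "nd * nd = d \<bullet> d" by (simp add: nd_def flip: power2_eq_square power2_norm_eq_inner)
    have xd_pos: "x \<bullet> d > 0" using dd nd2 ndp by (smt (verit) mult_pos_pos)
    have x0u: "x0 \<bullet> u = 0" using x0p by (simp add: u_def d_def inner_diff_right c_def)
    have xu: "x \<bullet> u \<ge> 0" using xd_pos ndp by (simp add: u_def)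
    have Hx: "hrefl u x = p"
    proof -
      have "(2 * (x \<bullet> u)) *\<^sub>R u = (2 * (x \<bullet> d) / (nd * nd)) *\<^sub>R d"
        by (simp add: u_def field_simps)
      also have "2 * (x \<bullet> d) / (nd * nd) = 1" using nd2 dd ndp xd_pos by simp
      finally show ?thesis by (simp add: hrefl_def d_def)
    qed
    have pd: "p \<bullet> d = - (x \<bullet> d)" using dd xx pp
      by (simp add: d_def inner_diff_left inner_diff_right inner_commute)
    have pu: "p \<bullet> (-u) \<ge> 0" using pd xd_pos ndp by (simp add: u_def)
    have un': "norm (-u) = 1" using un by simp
    have 1: "v0 p \<le> v0 x" using G_mono[OF un _ xS xu] x0u Hx by simp
    have Hp: "hrefl (-u) p = x" using Hx hrefl_invol[OF un, of x] by (simp add: hrefl_neg)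
    have 2: "v0 x \<le> v0 p" using G_mono[OF un' _ pS pu] x0u Hp by simp
    show ?thesis using 1 2 by (simp add: ff_def p_def c_def)
  qed
qed

lemma ff_mono: assumes "0 \<le> a" "a \<le> b" "b \<le> pi" shows "ff b \<le> ff a"
proof (cases "a = b")
  case True then show ?thesis by simp
next
  case False
  define m where "m = (a + b) / 2"
  define u where "u = uv x0 e m"
  have un: "norm u = 1" by (simp add: u_def uv_norm[OF x0n en ex0])
  have x0u: "x0 \<bullet> u \<ge> 0" unfolding u_def uv_x0[OF x0n en ex0] m_def
    using assms by (intro sin_ge_zero) auto
  have zu: "Pt x0 e a \<bullet> u \<ge> 0" unfolding u_def Pt_uv[OF x0n en ex0] m_def
    using assms by (intro sin_ge_zero) auto
  have "hrefl u (Pt x0 e a) = Pt x0 e b" unfolding u_def hrefl_Pt[OF x0n en ex0] m_def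
    by (simp add: field_simps)
  then show ?thesis using G_mono[OF un x0u PtS zu] by (simp add: ff_def)
qed

lemma ff_src: assumes "0 \<le> t" "t \<le> rr" shows "dist (Pt x0 e t) x0 \<le> r" "ff t = 1"
proof -
  have "cos rr \<le> cos t" using assms rr_facts by (intro cos_monotone_0_pi_le) auto
  then have "(dist (Pt x0 e t) x0)^2 \<le> r^2" using Pt_x0_dist2[OF x0n en ex0, of t] rr_facts(1) by simp
  then show d: "dist (Pt x0 e t) x0 \<le> r" by (rule power2_le_imp_le) (use r in auto)
  show "ff t = 1" using on_src PtS d by (simp add: ff_def)
qed

lemma ff_out: assumes "rr < t" "t \<le> pi" shows "\<not> dist (Pt x0 e t) x0 \<le> r" "ff t < 1"
proof -
  have "cos t < cos rr" using assms rr_facts by (intro cos_monotone_0_pi) auto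
  then have lt: "r^2 < (dist (Pt x0 e t) x0)^2" using Pt_x0_dist2[OF x0n en ex0, of t] rr_facts(1) by simp
  show d: "\<not> dist (Pt x0 e t) x0 \<le> r"
  proof
    assume "dist (Pt x0 e t) x0 \<le> r"
    then have "(dist (Pt x0 e t) x0)^2 \<le> r^2" by (intro power_mono) auto
    then show False using lt by simp
  qed
  show "ff t < 1" unfolding ff_def by (rule v0_lt1[OF PtS d])
qed

end
end

context vsetup
begin
context fixes e :: 'a assumes en: "norm e = 1" and ex0: "e \<bullet> x0 = 0"
begin

lemma ff_strict:
  assumes th: "0 \<le> \<theta>" "\<theta> \<le> pi" and th': "\<theta>' \<le> pi" and gap: "\<theta>' > \<theta> + rr"
  shows "ff e \<theta>' < ff e \<theta>"
proof (rule ccontr)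
  assume "\<not> ff e \<theta>' < ff e \<theta>"
  have x0n': "norm x0 = 1" using x0 by simp
  have rr: "cos rr = 1 - r^2/2" "0 < rr" "rr < pi/2" by (rule rr_facts)+
  have mono: "ff e b \<le> ff e a" if "0 \<le> a" "a \<le> b" "b \<le> pi" for a b
    by (rule ff_mono[OF en ex0 that])
  define c where "c = ff e \<theta>'"
  have fth: "ff e \<theta> = c" using \<open>\<not> ff e \<theta>' < ff e \<theta>\<close> mono[of \<theta> \<theta>'] th th' gap rr by (simp add: c_def)
  have c1: "c < 1" unfolding c_def using gap th th' rr by (intro ff_out[OF en ex0]) auto
  define I where "I = {\<phi>. 0 \<le> \<phi> \<and> \<phi> \<le> pi \<and> ff e \<phi> = c}"
  have thI: "\<theta> \<in> I" using th fth by (simp add: I_def)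
  have Ine: "I \<noteq> {}" using thI by blast
  have bdd: "bdd_below I" by (rule bdd_belowI[where m=0]) (auto simp: I_def)
  define a where "a = Inf I"
  have I_rr: "rr < \<phi>" if "\<phi> \<in> I" for \<phi>
  proof (rule ccontr)
    assume "\<not> rr < \<phi>"
    then have "ff e \<phi> = 1" using that by (intro ff_src[OF en ex0]) (auto simp: I_def)
    then show False using that c1 by (simp add: I_def)
  qed
  have a_rr: "rr \<le> a" unfolding a_def using Ine I_rr by (intro cInf_greatest) (auto intro: less_imp_le)
  have a_th: "a \<le> \<theta>" unfolding a_def by (rule cInf_lower[OF thI bdd])
  define \<delta> where "\<delta> = rr / 4"
  have dpos: "\<delta> > 0" using rr by (simp add: \<delta>_def)
  obtain \<alpha>0 where \<alpha>0: "\<alpha>0 \<in> I" "\<alpha>0 < a + \<delta>"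
    using cInf_lessD[OF Ine, of "a + \<delta>"] dpos by (auto simp: a_def)
  define \<alpha> where "\<alpha> = min \<alpha>0 \<theta>"
  have \<alpha>I: "\<alpha> \<in> I" using \<alpha>0(1) thI by (auto simp: \<alpha>_def min_def)
  have a_al: "a \<le> \<alpha>" unfolding a_def by (rule cInf_lower[OF \<alpha>I bdd])
  have al_lt: "\<alpha> < a + \<delta>" using \<alpha>0(2) by (simp add: \<alpha>_def)
  have al_th: "\<alpha> \<le> \<theta>" by (simp add: \<alpha>_def)
  have fal: "ff e \<alpha> = c" using \<alpha>I by (simp add: I_def)
  define L where "L = \<theta>' - \<theta>"
  have L: "L > rr" "\<alpha> + L \<le> pi" using gap al_th th' by (auto simp: L_def)
  have al0: "0 < \<alpha>" using a_al a_rr rr by linarith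
  have falL: "ff e (\<alpha> + L) = c"
  proof -
    have "ff e (\<alpha> + L) \<le> ff e \<alpha>" using al0 L rr by (intro mono) auto
    moreover have "ff e \<theta>' \<le> ff e (\<alpha> + L)" using al0 L rr al_th th' by (intro mono) (auto simp: L_def)
    ultimately show ?thesis using fal by (simp add: c_def)
  qed
  define \<beta> where "\<beta> = a - \<delta>"
  have be0: "0 < \<beta>" using a_rr dpos by (simp add: \<beta>_def \<delta>_def)
  define m where "m = \<alpha> + L / 2"
  define u where "u = uv x0 e m"
  define z where "z = Pt x0 e \<alpha>"
  define z' where "z' = Pt x0 e (\<alpha> + L)"
  have un: "norm u = 1" by (simp add: u_def uv_norm[OF x0n' en ex0])
  have x0u: "x0 \<bullet> u \<ge> 0" unfolding u_def uv_x0[OF x0n' en ex0] m_def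
    using al0 L rr by (intro sin_ge_zero) auto
  have zu: "z \<bullet> u \<ge> 0" unfolding u_def z_def Pt_uv[OF x0n' en ex0] m_def
    using L rr al0 by (intro sin_ge_zero) auto
  have Hz: "hrefl u z = z'" unfolding u_def z_def z'_def hrefl_Pt[OF x0n' en ex0] m_def
    by (simp add: algebra_simps)
  have zS: "z \<in> sphere 0 1" by (simp only: z_def PtS[OF en ex0])
  have z'S: "z' \<in> sphere 0 1" by (simp only: z'_def PtS[OF en ex0])
  have zF: "\<not> dist z x0 \<le> r"
  proof
    assume "dist z x0 \<le> r"
    then have "v0 z = 1" using on_src zS by auto
    then show False using fal c1 by (simp add: ff_def[OF en ex0] z_def)
  qed
  have G0: "GG u z = 0" using GG_def[OF un x0u, of z] Hz zS z'S fal falL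
    by (simp add: vv_S ff_def[OF en ex0] z_def z'_def)
  define V where "V = {y. dist y z < r} \<inter> {y. r < dist y z'} \<inter> {y. cos a < x0 \<bullet> y}
     \<inter> {y. x0 \<bullet> (y - (2 * (y \<bullet> u)) *\<^sub>R u) < cos \<alpha>}"
  have Vo: "open V" unfolding V_def
    by (intro open_Int open_Collect_less continuous_intros)
  define w where "w = Pt x0 e \<beta>"
  have wS: "w \<in> sphere 0 1" by (simp only: w_def PtS[OF en ex0])
  have wV: "w \<in> V"
  proof -
    have "cos rr < cos (\<alpha> - \<beta>)" using a_al al_lt rr by (intro cos_monotone_0_pi) (auto simp: \<beta>_def \<delta>_def)
    then have "(dist w z)^2 < r^2"
      using Pt_dist2[OF x0n' en ex0, where s=\<beta> and t=\<alpha>] rr(1) by (simp add: w_def z_def cos_diff algebra_simps) 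
    then have 1: "dist w z < r" using r by (smt (verit) power_mono zero_le_dist)
    have "cos (\<alpha> + L - \<beta>) < cos rr" using a_al L rr be0 dpos by (intro cos_monotone_0_pi) (auto simp: \<beta>_def)
    then have "r^2 < (dist w z')^2"
      using Pt_dist2[OF x0n' en ex0, where s=\<beta> and t="\<alpha> + L"] rr(1) by (simp add: w_def z'_def cos_diff algebra_simps)
    then have 2: "r < dist w z'" using r by (smt (verit) power_mono zero_le_dist)
    have 3: "cos a < x0 \<bullet> w" unfolding w_def Pt_x0[OF x0n' en ex0]
      using be0 a_th th by (intro cos_monotone_0_pi) (auto simp: \<beta>_def dpos)
    have "x0 \<bullet> hrefl u w = cos (2 * m - \<beta>)"
      unfolding u_def w_def hrefl_Pt[OF x0n' en ex0] Pt_x0[OF x0n' en ex0] ..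
    also have "\<dots> < cos \<alpha>"
    proof (rule cos_lt_aux)
      show "0 \<le> \<alpha>" "\<alpha> \<le> pi" using al0 L rr by linarith+
      have "2 * m - \<beta> = 2 * \<alpha> + L - \<beta>" by (simp add: m_def)
      moreover have "\<alpha> < 2 * \<alpha> + L - \<beta>" using a_al L rr dpos by (simp add: \<beta>_def)
      moreover have "2 * \<alpha> + L - \<beta> < 2 * pi - \<alpha>"
        using al_lt a_th L rr dpos unfolding \<beta>_def \<delta>_def L_def by linarith
      ultimately show "\<alpha> < 2 * m - \<beta>" "2 * m - \<beta> < 2 * pi - \<alpha>" by linarith+
    qed
    finally have 4: "x0 \<bullet> (w - (2 * (w \<bullet> u)) *\<^sub>R u) < cos \<alpha>" by (simp add: hrefl_def)
    show ?thesis using 1 2 3 4 by (simp add: V_def)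
  qed
  have pos: "\<forall>y\<in>V \<inter> sphere 0 1. GG u y * CC u z y > 0"
  proof
    fix y assume y: "y \<in> V \<inter> sphere 0 1"
    then have yS: "y \<in> sphere 0 1" and yV: "y \<in> V" by auto
    have HyS: "hrefl u y \<in> sphere 0 1" using yS un by simp
    have CC1: "CC u z y = 1" using CC_def[OF un x0u, of z y] yV Hz
      by (simp add: V_def disk_kernel_def dist_commute)
    have y1: "-1 \<le> x0 \<bullet> y" "x0 \<bullet> y \<le> 1" using inner_le1[OF x0n', of y] yS by auto
    have Hy1: "-1 \<le> x0 \<bullet> hrefl u y" "x0 \<bullet> hrefl u y \<le> 1" using inner_le1[OF x0n', of "hrefl u y"] HyS by auto
    define \<phi> where "\<phi> = arccos (x0 \<bullet> y)"
    have phi: "0 \<le> \<phi>" "\<phi> \<le> pi" using arccos_bounded[OF y1] by (auto simp: \<phi>_def)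
    have "\<phi> < arccos (cos a)" unfolding \<phi>_def
      using yV y1 by (intro arccos_less_arccos) (auto simp: V_def)
    then have phia: "\<phi> < a" using a_rr a_th th rr by (simp add: arccos_cos)
    have "ff e \<phi> \<noteq> c"
    proof
      assume "ff e \<phi> = c"
      then have "\<phi> \<in> I" using phi by (simp add: I_def)
      then have "a \<le> \<phi>" unfolding a_def by (rule cInf_lower[OF _ bdd])
      then show False using phia by simp
    qed
    moreover have "ff e \<theta> \<le> ff e \<phi>" using phi phia a_th th by (intro mono) auto
    ultimately have v1: "v0 y > c" using sym[OF en ex0 yS] fth by (simp add: \<phi>_def)
    define \<psi> where "\<psi> = arccos (x0 \<bullet> hrefl u y)"
    have psi: "0 \<le> \<psi>" "\<psi> \<le> pi" using arccos_bounded[OF Hy1] by (auto simp: \<psi>_def)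
    have "arccos (cos \<alpha>) < \<psi>" unfolding \<psi>_def
      using yV Hy1 by (intro arccos_less_arccos) (auto simp: V_def hrefl_def)
    then have "\<alpha> < \<psi>" using al0 L rr by (simp add: arccos_cos)
    then have "ff e \<psi> \<le> ff e \<alpha>" using al0 psi by (intro mono) auto
    then have v2: "v0 (hrefl u y) \<le> c" using sym[OF en ex0 HyS] fal by (simp add: \<psi>_def)
    have "GG u y > 0" using GG_def[OF un x0u, of y] v1 v2 yS HyS by (simp add: vv_S)
    then show "GG u y * CC u z y > 0" using CC1 by simp
  qed
  show False by (rule strict_contra[OF un x0u zS zu zF G0 Vo wV wS pos])
qed

end

lemma final:
  assumes dim: "DIM('a) \<ge> 2"
  shows "\<exists>f :: real \<Rightarrow> real.
           (\<forall>\<theta>\<in>{0..pi}. 0 \<le> f \<theta> \<and> f \<theta> \<le> 1)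
         \<and> (\<forall>x\<in>sphere 0 1. v0 x = f (sph_angle x0 x))
         \<and> (\<forall>\<theta>\<in>{0..pi}. \<forall>\<theta>'\<in>{0..pi}. \<theta>' > \<theta> + arccos (1 - r\<^sup>2 / 2) \<longrightarrow> f \<theta> > f \<theta>')"
proof -
  obtain e0 :: 'a where e0: "e0 \<noteq> 0" "orthogonal x0 e0" using orthogonal_to_vector_exists[OF dim] by blast
  define e where "e = e0 /\<^sub>R norm e0"
  have en: "norm e = 1" using e0 by (simp add: e_def)
  have ex0: "e \<bullet> x0 = 0" using e0 by (simp add: e_def orthogonal_def inner_commute)
  show ?thesis
  proof (intro exI[of _ "ff e"] conjI ballI impI)
    fix \<theta> assume "\<theta> \<in> {0..pi}"
    show "0 \<le> ff e \<theta>" "ff e \<theta> \<le> 1" using ff01[OF en ex0] by auto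
  next
    fix x :: 'a assume "x \<in> sphere 0 1"
    then show "v0 x = ff e (sph_angle x0 x)" using sym[OF en ex0] by (simp add: sph_angle_def)
  next
    fix \<theta> \<theta>' assume "\<theta> \<in> {0..pi}" "\<theta>' \<in> {0..pi}" "\<theta>' > \<theta> + arccos (1 - r\<^sup>2 / 2)"
    then show "ff e \<theta> > ff e \<theta>'" by (intro ff_strict[OF en ex0]) (auto simp: rr_def)
  qed
qed

end

theorem theorem4:
  fixes r \<rho> :: real and x0 :: "'a::euclidean_space" and v0 :: "'a \<Rightarrow> real"
    and r' :: real
  assumes dim: "DIM('a) \<ge> 2"
    and r: "0 < r" "r < 1"
    and rho: "\<rho> > 0"
    and x0: "x0 \<in> sphere 0 1"
    and meas: "v0 \<in> borel_measurable (sphere_unif :: 'a measure)"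
    and range: "\<forall>x\<in>sphere 0 1. 0 \<le> v0 x \<and> v0 x \<le> 1"
    and on_src: "\<forall>x\<in>sphere 0 1. dist x x0 \<le> r \<longrightarrow> v0 x = 1"
    and eqn: "\<forall>x\<in>sphere 0 1. \<not> dist x x0 \<le> r \<longrightarrow>
       v0 x = ((LINT y:{y\<in>sphere 0 1. dist y x0 \<le> r}|sphere_unif. disk_kernel r x y)
             + (LINT y:{y\<in>sphere 0 1. \<not> dist y x0 \<le> r}|sphere_unif. v0 y * disk_kernel r x y))
             / (\<rho> + (LINT y:sphere 0 1|sphere_unif. disk_kernel r x y))"
    and r'_def: "r' = arccos (1 - r\<^sup>2 / 2)"
  shows "\<exists>f :: real \<Rightarrow> real.
           (\<forall>\<theta>\<in>{0..pi}. 0 \<le> f \<theta> \<and> f \<theta> \<le> 1)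
         \<and> (\<forall>x\<in>sphere 0 1. v0 x = f (sph_angle x0 x))
         \<and> (\<forall>\<theta>\<in>{0..pi}. \<forall>\<theta>'\<in>{0..pi}. \<theta>' > \<theta> + r' \<longrightarrow> f \<theta> > f \<theta>')"
proof -
  have V: "vsetup r \<rho> x0 v0" unfolding vsetup_def using r rho x0 meas range on_src eqn by blast
  show ?thesis using vsetup.final[OF V dim] unfolding r'_def .
qed

end
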